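(* Let $G$ be a topological group such that $\mathfrak{L}(G)$ carries a structure of real vector space whose scalar multiplication and addition satisfy, for all $t,s\in\mathbb{R}$ and $X_1,X_2\in\mathfrak{L}(G)$, $$(tX_1)(s)=X_1(ts),\qquad (X_1+X_2)(t)=\lim_{n\to\infty}\Big(X_1\big(\tfrac{t}{n}\big)X_2\big(\tfrac{t}{n}\big)\Big)^n,$$ the latter convergence being uniform on every compact subset of $\mathbb{R}$. Assume moreover that $\mathfrak{L}(G)$ is endowed with a topology which is a Baire topology, is stronger than the compact-open topology, and is compatible with this vector space structure; and let $\mathcal{Y}$ be a metrizable Hausdorff locally convex space. Endow $\mathcal{LUC}_{\rm loc}(G,\mathcal{Y})$ with the topology of pointwise convergence. Then for every $\phi\in\mathcal{LUC}^1_{\rm loc}(G,\mathcal{Y})$ the map $\mathfrak{L}(G)\to\mathcal{LUC}_{\rm loc}(G,\mathcal{Y})$, $X\mapsto D^\lambda_X\phi$, is linear and continuous.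
   Context: All topological groups are Hausdorff. $\mathfrak{L}(G)$ is the set of continuous homomorphisms $(\mathbb{R},+)\to G$; its compact-open topology is the topology of uniform convergence on compact subsets of $\mathbb{R}$. For $\phi\colon G\to\mathcal{Y}$, $X\in\mathfrak{L}(G)$, $g\in G$: $(D^\lambda_X\phi)(g)=\lim_{t\to0}\frac{\phi(gX(t))-\phi(g)}{t}$ when it exists. $\mathcal{LUC}_{\rm loc}(G,\mathcal{Y})$ is the set of $\phi\colon G\to\mathcal{Y}$ such that every $g_0\in G$ has a neighborhood $V$ with: for every neighborhood $U$ of $0\in\mathcal{Y}$ there is a neighborhood $W$ of $\mathbf{1}\in G$ such that $x,y\in V$, $x^{-1}y\in W$ imply $\phi(x)-\phi(y)\in U$. $\mathcal{LUC}^1_{\rm loc}(G,\mathcal{Y})$ is the set of $\phi\in\mathcal{LUC}_{\rm loc}(G,\mathcal{Y})$ such that $D^\lambda_X\phi(g)$ exists for all $X,g$ and $D^\lambda_X\phi\in\mathcal{LUC}_{\rm loc}(G,\mathcal{Y})$ for every $X\in\mathfrak{L}(G)$. *)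

theory Defs
  imports "HOL-Analysis.Analysis"
begin

text \<open>Groups are written additively (class group_add, which does NOT assume commutativity):
  the group product g h is g + h, the identity is 0, the inverse of g is - g.\<close>

definition topological_group :: "'g::{group_add, topological_space} itself \<Rightarrow> bool" where
  "topological_group _ \<longleftrightarrow>
     continuous_on UNIV (\<lambda>p::'g \<times> 'g. fst p + snd p) \<and> continuous_on UNIV (uminus :: 'g \<Rightarrow> 'g)"

definition oneps :: "('g::{group_add, topological_space}) itself \<Rightarrow> (real \<Rightarrow> 'g) set" where
  "oneps _ = {X. continuous_on UNIV X \<and> (\<forall>s t. X (s + t) = X s + X t)}"

definition gpow :: "'g::group_add \<Rightarrow> nat \<Rightarrow> 'g" where
  "gpow x n = ((\<lambda>y. x + y) ^^ n) 0"

definition unif_compact_conv :: "(nat \<Rightarrow> real \<Rightarrow> 'g::{group_add, topological_space}) \<Rightarrow> (real \<Rightarrow> 'g) \<Rightarrow> bool" where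
  "unif_compact_conv F Z \<longleftrightarrow>
     (\<forall>K U. compact K \<and> open U \<and> (0::'g) \<in> U \<longrightarrow>
        (\<forall>\<^sub>F n in sequentially. \<forall>t\<in>K. - Z t + F n t \<in> U))"

definition compact_open :: "(real \<Rightarrow> 'g::{group_add, topological_space}) set \<Rightarrow> (real \<Rightarrow> 'g) topology" where
  "compact_open L = topology_generated_by {{X \<in> L. X ` K \<subseteq> U} | K U. compact K \<and> open U}"

definition real_vector_space_on ::
  "'a set \<Rightarrow> ('a \<Rightarrow> 'a \<Rightarrow> 'a) \<Rightarrow> (real \<Rightarrow> 'a \<Rightarrow> 'a) \<Rightarrow> bool" where
  "real_vector_space_on L add sc \<longleftrightarrow>
     (\<forall>x\<in>L. \<forall>y\<in>L. add x y \<in> L) \<and> (\<forall>a. \<forall>x\<in>L. sc a x \<in> L) \<and>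
     (\<forall>x\<in>L. \<forall>y\<in>L. \<forall>z\<in>L. add (add x y) z = add x (add y z)) \<and>
     (\<forall>x\<in>L. \<forall>y\<in>L. add x y = add y x) \<and>
     (\<exists>z\<in>L. (\<forall>x\<in>L. add z x = x) \<and> (\<forall>x\<in>L. \<exists>y\<in>L. add x y = z)) \<and>
     (\<forall>a. \<forall>x\<in>L. \<forall>y\<in>L. sc a (add x y) = add (sc a x) (sc a y)) \<and>
     (\<forall>a b. \<forall>x\<in>L. sc (a + b) x = add (sc a x) (sc b x)) \<and>
     (\<forall>a b. \<forall>x\<in>L. sc a (sc b x) = sc (a * b) x) \<and>
     (\<forall>x\<in>L. sc 1 x = x)"

definition Baire_space :: "'a topology \<Rightarrow> bool" where
  "Baire_space T \<longleftrightarrow>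
     (\<forall>U :: nat \<Rightarrow> 'a set. (\<forall>n. openin T (U n) \<and> T closure_of (U n) = topspace T) \<longrightarrow>
        T closure_of (topspace T \<inter> (\<Inter>n. U n)) = topspace T)"

definition metrizable_lcs :: "'y::{real_vector, t2_space} itself \<Rightarrow> bool" where
  "metrizable_lcs _ \<longleftrightarrow>
     continuous_on UNIV (\<lambda>p::'y \<times> 'y. fst p + snd p) \<and>
     continuous_on UNIV (\<lambda>p::real \<times> 'y. fst p *\<^sub>R snd p) \<and>
     (\<forall>U::'y set. open U \<and> 0 \<in> U \<longrightarrow> (\<exists>V. open V \<and> convex V \<and> 0 \<in> V \<and> V \<subseteq> U)) \<and>
     metrizable_space (euclidean :: 'y topology)"

definition LUC_loc :: "('g::{group_add, topological_space} \<Rightarrow> 'y::{real_vector, topological_space}) set" where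
  "LUC_loc = {\<phi>. \<forall>g0. \<exists>V. open V \<and> g0 \<in> V \<and>
      (\<forall>U. open U \<and> (0::'y) \<in> U \<longrightarrow>
         (\<exists>W. open W \<and> (0::'g) \<in> W \<and>
            (\<forall>x\<in>V. \<forall>y\<in>V. - x + y \<in> W \<longrightarrow> \<phi> x - \<phi> y \<in> U)))}"

definition has_left_deriv ::
  "('g::{group_add, topological_space} \<Rightarrow> 'y::{real_vector, topological_space}) \<Rightarrow> (real \<Rightarrow> 'g) \<Rightarrow> 'g \<Rightarrow> 'y \<Rightarrow> bool" where
  "has_left_deriv \<phi> X g D \<longleftrightarrow> ((\<lambda>t. (1 / t) *\<^sub>R (\<phi> (g + X t) - \<phi> g)) \<longlongrightarrow> D) (at 0)"

definition left_deriv ::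
  "('g::{group_add, topological_space} \<Rightarrow> 'y::{real_vector, t2_space}) \<Rightarrow> (real \<Rightarrow> 'g) \<Rightarrow> 'g \<Rightarrow> 'y" where
  "left_deriv \<phi> X g = Lim (at 0) (\<lambda>t. (1 / t) *\<^sub>R (\<phi> (g + X t) - \<phi> g))"

definition LUC1_loc :: "('g::{group_add, topological_space} \<Rightarrow> 'y::{real_vector, t2_space}) set" where
  "LUC1_loc = {\<phi> \<in> LUC_loc.
      (\<forall>X\<in>oneps TYPE('g). (\<forall>g. \<exists>D. has_left_deriv \<phi> X g D) \<and> left_deriv \<phi> X \<in> LUC_loc)}"

definition LUC_pointwise :: "('g::{group_add, topological_space} \<Rightarrow> 'y::{real_vector, topological_space}) topology" where
  "LUC_pointwise = subtopology (product_topology (\<lambda>_. euclidean) UNIV) LUC_loc"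

end

theory Submission
  imports Defs
begin


lemma Y_tendsto_add:
  fixes f g :: "'a \<Rightarrow> 'y::{real_vector, t2_space}"
  assumes Y: "metrizable_lcs TYPE('y)" and "(f \<longlongrightarrow> a) F" "(g \<longlongrightarrow> b) F"
  shows "((\<lambda>x. f x + g x) \<longlongrightarrow> a + b) F"
proof -
  have c: "continuous_on UNIV (\<lambda>p::'y \<times> 'y. fst p + snd p)" using Y by (simp add: metrizable_lcs_def)
  have "((\<lambda>x. (\<lambda>p::'y \<times> 'y. fst p + snd p) (f x, g x)) \<longlongrightarrow> (\<lambda>p::'y \<times> 'y. fst p + snd p) (a, b)) F"
    by (rule continuous_on_tendsto_compose[OF c]) (auto intro: tendsto_Pair assms)
  then show ?thesis by simp
qed

lemma Y_tendsto_scaleR: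
  fixes f :: "'a \<Rightarrow> 'y::{real_vector, t2_space}"
  assumes Y: "metrizable_lcs TYPE('y)" and "(c \<longlongrightarrow> a) F" "(f \<longlongrightarrow> b) F"
  shows "((\<lambda>x. c x *\<^sub>R f x) \<longlongrightarrow> a *\<^sub>R b) F"
proof -
  have c: "continuous_on UNIV (\<lambda>p::real \<times> 'y. fst p *\<^sub>R snd p)" using Y by (simp add: metrizable_lcs_def)
  have "((\<lambda>x. (\<lambda>p::real \<times> 'y. fst p *\<^sub>R snd p) (c x, f x)) \<longlongrightarrow> (\<lambda>p::real \<times> 'y. fst p *\<^sub>R snd p) (a, b)) F"
    by (rule continuous_on_tendsto_compose[OF c]) (auto intro: tendsto_Pair assms)
  then show ?thesis by simp
qed

lemma Y_tendsto_diff: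
  fixes f g :: "'a \<Rightarrow> 'y::{real_vector, t2_space}"
  assumes Y: "metrizable_lcs TYPE('y)" and "(f \<longlongrightarrow> a) F" "(g \<longlongrightarrow> b) F"
  shows "((\<lambda>x. f x - g x) \<longlongrightarrow> a - b) F"
proof -
  have "((\<lambda>x. f x + (-1) *\<^sub>R g x) \<longlongrightarrow> a + (-1) *\<^sub>R b) F"
    by (intro Y_tendsto_add[OF Y] Y_tendsto_scaleR[OF Y] assms tendsto_const)
  then show ?thesis by simp
qed

lemma G_tendsto_add:
  fixes f g :: "'a \<Rightarrow> 'g::{group_add, t2_space}"
  assumes G: "topological_group TYPE('g)" and "(f \<longlongrightarrow> a) F" "(g \<longlongrightarrow> b) F"
  shows "((\<lambda>x. f x + g x) \<longlongrightarrow> a + b) F"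
proof -
  have c: "continuous_on UNIV (\<lambda>p::'g \<times> 'g. fst p + snd p)" using G by (simp add: topological_group_def)
  have "((\<lambda>x. (\<lambda>p::'g \<times> 'g. fst p + snd p) (f x, g x)) \<longlongrightarrow> (\<lambda>p::'g \<times> 'g. fst p + snd p) (a, b)) F"
    by (rule continuous_on_tendsto_compose[OF c]) (auto intro: tendsto_Pair assms)
  then show ?thesis by simp
qed

lemma G_tendsto_minus:
  fixes f :: "'a \<Rightarrow> 'g::{group_add, t2_space}"
  assumes G: "topological_group TYPE('g)" and "(f \<longlongrightarrow> a) F"
  shows "((\<lambda>x. - f x) \<longlongrightarrow> - a) F"
proof -
  have c: "continuous_on UNIV (uminus::'g\<Rightarrow>'g)" using G by (simp add: topological_group_def)
  show ?thesis
    by (rule continuous_on_tendsto_compose[OF c]) (auto intro: assms)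
qed

lemma regular_shrink:
  fixes U :: "'y::{real_vector, t2_space} set"
  assumes Y: "metrizable_lcs TYPE('y)" and "open U" "a \<in> U"
  shows "\<exists>U1. open U1 \<and> a \<in> U1 \<and> closure U1 \<subseteq> U"
proof -
  have "regular_space (euclidean::'y topology)"
    using Y by (simp add: metrizable_lcs_def metrizable_imp_regular_space)
  then have "neighbourhood_base_of (closedin euclidean) (euclidean::'y topology)"
    by (simp add: neighbourhood_base_of_closedin)
  then obtain U1 V where "open U1" "closed V" "a \<in> U1" "U1 \<subseteq> V" "V \<subseteq> U"
    using assms unfolding neighbourhood_base_of by (metis open_openin closed_closedin)
  then show ?thesis by (meson closure_minimal order_trans)
qed

lemma contI:
  assumes "\<And>x. (f \<longlongrightarrow> f x) (at x)"
  shows "continuous_on S f"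
  unfolding continuous_on_def by (auto intro: tendsto_mono[OF at_le] assms)

lemma open_vimage_cont:
  assumes "\<And>x. (f \<longlongrightarrow> f x) (at x)" "open S"
  shows "open (f -` S)"
  by (rule open_vimage[OF assms(2) contI[OF assms(1)]])

lemma Y_small_sum:
  fixes Om :: "'y::{real_vector, t2_space} set"
  assumes Y: "metrizable_lcs TYPE('y)" and "open Om" "0 \<in> Om"
  shows "\<exists>E. open E \<and> 0 \<in> E \<and> (\<forall>a\<in>E. \<forall>b\<in>E. a + b \<in> Om)"
proof -
  have c: "continuous_on UNIV (\<lambda>p::'y \<times> 'y. fst p + snd p)" using Y by (simp add: metrizable_lcs_def)
  have "open ((\<lambda>p::'y \<times> 'y. fst p + snd p) -` Om)" by (rule open_vimage[OF assms(2) c])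
  moreover have "(0,0) \<in> (\<lambda>p::'y \<times> 'y. fst p + snd p) -` Om" using assms by simp
  ultimately obtain A B where "open A" "open B" "(0,0) \<in> A \<times> B" "A \<times> B \<subseteq> (\<lambda>p::'y \<times> 'y. fst p + snd p) -` Om"
    by (rule open_prod_elim)
  then show ?thesis by (intro exI[of _ "A \<inter> B"]) auto
qed

lemma G_small_sum:
  fixes Om :: "'g::{group_add, t2_space} set"
  assumes G: "topological_group TYPE('g)" and "open Om" "0 \<in> Om"
  shows "\<exists>E. open E \<and> 0 \<in> E \<and> (\<forall>a\<in>E. \<forall>b\<in>E. a + b \<in> Om)"
proof -
  have c: "continuous_on UNIV (\<lambda>p::'g \<times> 'g. fst p + snd p)" using G by (simp add: topological_group_def)
  have "open ((\<lambda>p::'g \<times> 'g. fst p + snd p) -` Om)" by (rule open_vimage[OF assms(2) c])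
  moreover have "(0,0) \<in> (\<lambda>p::'g \<times> 'g. fst p + snd p) -` Om" using assms by simp
  ultimately obtain A B where "open A" "open B" "(0,0) \<in> A \<times> B" "A \<times> B \<subseteq> (\<lambda>p::'g \<times> 'g. fst p + snd p) -` Om"
    by (rule open_prod_elim)
  then show ?thesis by (intro exI[of _ "A \<inter> B"]) auto
qed

lemma G_open_translate:
  fixes Om :: "'g::{group_add, t2_space} set"
  assumes G: "topological_group TYPE('g)" and "open Om"
  shows "open {w. c + w \<in> Om}"
proof -
  have "open ((\<lambda>w. c + w) -` Om)"
    by (rule open_vimage_cont[OF _ assms(2)]) (intro G_tendsto_add[OF G] tendsto_const tendsto_ident_at)
  then show ?thesis by (simp add: vimage_def)
qed

lemma Y_convex_closure:
  fixes W :: "'y::{real_vector, t2_space} set"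
  assumes Y: "metrizable_lcs TYPE('y)" and "convex W"
  shows "convex (closure W)"
  unfolding convex_def
proof (intro ballI allI impI)
  fix x y and u v :: real
  assume x: "x \<in> closure W" and y: "y \<in> closure W" and uv: "0 \<le> u" "0 \<le> v" "u + v = 1"
  define h where "h = (\<lambda>p::'y\<times>'y. u *\<^sub>R fst p + v *\<^sub>R snd p)"
  have hc: "continuous_on (closure (W \<times> W)) h"
    unfolding h_def
    by (intro contI Y_tendsto_add[OF Y] Y_tendsto_scaleR[OF Y] tendsto_const tendsto_fst tendsto_snd tendsto_ident_at)
  have "h ` (W \<times> W) \<subseteq> closure W"
  proof (clarsimp simp: h_def)
    fix a b assume "a \<in> W" "b \<in> W"
    then have "u *\<^sub>R a + v *\<^sub>R b \<in> W" using assms(2) uv by (simp add: convex_def)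
    then show "u *\<^sub>R a + v *\<^sub>R b \<in> closure W" using closure_subset by blast
  qed
  then have "h ` closure (W \<times> W) \<subseteq> closure W"
    using image_closure_subset[OF hc closed_closure] by blast
  then have "h (x, y) \<in> closure W" using x y by (auto simp: closure_Times)
  then show "u *\<^sub>R x + v *\<^sub>R y \<in> closure W" by (simp add: h_def)
qed



lemma mvt_convex:
  fixes \<psi> :: "real \<Rightarrow> 'y::{real_vector, t2_space}"
  assumes Y: "metrizable_lcs TYPE('y)" and s: "0 < s" and W: "convex W" "open W"
    and cont: "continuous_on {0..s} \<psi>"
    and der: "\<And>r. 0 \<le> r \<Longrightarrow> r < s \<Longrightarrow>
               \<exists>d\<in>W. ((\<lambda>v. (1/v) *\<^sub>R (\<psi> (r+v) - \<psi> r)) \<longlongrightarrow> d) (at_right 0)"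
  shows "\<exists>x\<in>closure W. \<psi> s - \<psi> 0 = s *\<^sub>R x"
proof -
  define A where "A r \<longleftrightarrow> (\<exists>x\<in>closure W. \<psi> r - \<psi> 0 = r *\<^sub>R x)" for r
  have cW: "convex (closure W)" by (rule Y_convex_closure[OF Y W(1)])
  obtain d0 where "d0 \<in> W" using der[of 0] s by auto
  then have A0: "A 0" unfolding A_def using closure_subset by auto
  define S where "S = {r \<in> {0..s}. \<forall>r'\<in>{0..r}. A r'}"
  have S0: "0 \<in> S" using A0 s by (auto simp: S_def)
  have Sne: "S \<noteq> {}" using S0 by auto
  have Sbdd: "bdd_above S" unfolding S_def by (rule bdd_aboveI[of _ s]) auto
  define r0 where "r0 = Sup S"
  have r0ge: "0 \<le> r0" unfolding r0_def using S0 Sbdd by (meson cSup_upper)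
  have r0le: "r0 \<le> s" unfolding r0_def using Sne by (intro cSup_least) (auto simp: S_def)
  have below: "A r" if hr: "0 \<le> r" "r < r0" for r
  proof -
    obtain r1 where "r1 \<in> S" "r < r1" using less_cSup_iff[OF Sne Sbdd, of r] hr(2) unfolding r0_def by blast
    then show ?thesis using hr by (auto simp: S_def)
  qed
  have Ar0: "A r0"
  proof (cases "r0 = 0")
    case True then show ?thesis using A0 by simp
  next
    case False
    then have r0pos: "0 < r0" using r0ge by simp
    define F where "F = at r0 within {0<..<r0}"
    have Fnb: "F \<noteq> bot" unfolding F_def using r0pos
      by (simp add: trivial_limit_within islimpt_greaterThanLessThan2)
    have "(\<psi> \<longlongrightarrow> \<psi> r0) (at r0 within {0..s})"
      using cont r0ge r0le by (simp add: continuous_on_def)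
    then have psi: "(\<psi> \<longlongrightarrow> \<psi> r0) F" unfolding F_def
      by (rule tendsto_within_subset) (use r0le in auto)
    have T1: "((\<lambda>r. (1/r) *\<^sub>R (\<psi> r - \<psi> 0)) \<longlongrightarrow> (1/r0) *\<^sub>R (\<psi> r0 - \<psi> 0)) F"
      by (intro Y_tendsto_scaleR[OF Y] Y_tendsto_diff[OF Y] psi tendsto_const tendsto_divide)
         (use r0pos F_def in \<open>auto intro: tendsto_ident_at\<close>)
    have E1: "eventually (\<lambda>r. (1/r) *\<^sub>R (\<psi> r - \<psi> 0) \<in> closure W) F"
      unfolding F_def eventually_at_filter
    proof (rule always_eventually, intro allI impI)
      fix r :: real assume "r \<in> {0<..<r0}"
      then obtain x where "x \<in> closure W" "\<psi> r - \<psi> 0 = r *\<^sub>R x" using below[of r] A_def by auto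
      then show "(1/r) *\<^sub>R (\<psi> r - \<psi> 0) \<in> closure W" using \<open>r \<in> {0<..<r0}\<close> by simp
    qed
    have "(1/r0) *\<^sub>R (\<psi> r0 - \<psi> 0) \<in> closure W"
      by (rule Lim_in_closed_set[OF closed_closure E1 Fnb T1])
    then show ?thesis unfolding A_def using r0pos
      by (intro bexI[of _ "(1/r0) *\<^sub>R (\<psi> r0 - \<psi> 0)"]) auto
  qed
  have "r0 = s"
  proof (rule ccontr)
    assume "r0 \<noteq> s"
    then have lt: "r0 < s" using r0le by simp
    obtain d where d: "d \<in> W" "((\<lambda>v. (1/v) *\<^sub>R (\<psi> (r0+v) - \<psi> r0)) \<longlongrightarrow> d) (at_right 0)"
      using der[OF r0ge lt] by auto
    then have "eventually (\<lambda>v. (1/v) *\<^sub>R (\<psi> (r0+v) - \<psi> r0) \<in> W) (at_right 0)"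
      using W(2) by (simp add: topological_tendstoD)
    then obtain b where b: "b > 0" "\<And>v. v > 0 \<Longrightarrow> v < b \<Longrightarrow> (1/v) *\<^sub>R (\<psi> (r0+v) - \<psi> r0) \<in> W"
      unfolding eventually_at_right_field by auto
    define r1 where "r1 = min (r0 + b/2) s"
    have r1gt: "r0 < r1" using b lt by (simp add: r1_def)
    have "r1 \<in> S" unfolding S_def
    proof (intro CollectI conjI ballI)
      show "r1 \<in> {0..s}" using r1gt r0ge by (auto simp: r1_def)
      fix r' assume r': "r' \<in> {0..r1}"
      show "A r'"
      proof (cases "r' \<le> r0")
        case True
        then show ?thesis using below[of r'] Ar0 r' by (cases "r' = r0") auto
      next
        case False
        define v where "v = r' - r0"
        have v: "0 < v" "v < b" using False r' b unfolding v_def r1_def by auto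
        define w where "w = (1/v) *\<^sub>R (\<psi> (r0+v) - \<psi> r0)"
        have w: "w \<in> closure W" using b(2)[OF v] closure_subset unfolding w_def by blast
        have wv: "\<psi> r' - \<psi> r0 = v *\<^sub>R w" using v unfolding w_def v_def by simp
        obtain x where x: "x \<in> closure W" "\<psi> r0 - \<psi> 0 = r0 *\<^sub>R x" using Ar0 A_def by auto
        have rpos: "0 < r'" using v r0ge unfolding v_def by simp
        have "(r0/r') *\<^sub>R x + (v/r') *\<^sub>R w \<in> closure W"
        proof -
          have "r0/r' + v/r' = 1" using rpos unfolding v_def by (simp add: add_divide_distrib[symmetric])
          moreover have "0 \<le> r0/r'" "0 \<le> v/r'" using r0ge rpos v by auto
          ultimately show ?thesis using cW x(1) w unfolding convex_def by blast
        qed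
        moreover have "\<psi> r' - \<psi> 0 = r' *\<^sub>R ((r0/r') *\<^sub>R x + (v/r') *\<^sub>R w)"
        proof -
          have "\<psi> r' - \<psi> 0 = (\<psi> r0 - \<psi> 0) + (\<psi> r' - \<psi> r0)" by simp
          also have "\<dots> = r0 *\<^sub>R x + v *\<^sub>R w" using x(2) wv by simp
          also have "\<dots> = r' *\<^sub>R ((r0/r') *\<^sub>R x + (v/r') *\<^sub>R w)"
            using rpos by (simp add: scaleR_add_right del: divide_const_simps)
          finally show ?thesis .
        qed
        ultimately show ?thesis unfolding A_def by blast
      qed
    qed
    then have "r1 \<le> r0" unfolding r0_def using Sbdd by (rule cSup_upper)
    then show False using r1gt by simp
  qed
  then show ?thesis using Ar0 A_def by simp
qed



lemma oneps_add: "X \<in> oneps TYPE('g::{group_add,t2_space}) \<Longrightarrow> X (s + t) = X s + X t"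
  by (simp add: oneps_def)

lemma oneps_0: "X \<in> oneps TYPE('g::{group_add,t2_space}) \<Longrightarrow> X 0 = 0"
  using oneps_add[of X 0 0] by (metis add_left_imp_eq add.right_neutral add_0)

lemma oneps_cont: "X \<in> oneps TYPE('g::{group_add,t2_space}) \<Longrightarrow> (X \<longlongrightarrow> X r) (at r)"
  by (simp add: oneps_def continuous_on_def)

lemma oneps_cont_on: "X \<in> oneps TYPE('g::{group_add,t2_space}) \<Longrightarrow> continuous_on S X"
  by (rule contI) (rule oneps_cont)

lemma LUC_cont:
  fixes \<psi> :: "'g::{group_add, t2_space} \<Rightarrow> 'y::{real_vector, t2_space}"
  assumes G: "topological_group TYPE('g)" and Y: "metrizable_lcs TYPE('y)"
    and psi: "\<psi> \<in> LUC_loc"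
  shows "(\<psi> \<longlongrightarrow> \<psi> g0) (at g0)"
proof (rule topological_tendstoI)
  fix S assume S: "open S" "\<psi> g0 \<in> S"
  define U where "U = (\<lambda>z. \<psi> g0 - z) -` S"
  have Uo: "open U" unfolding U_def
    by (rule open_vimage_cont[OF _ S(1)]) (intro Y_tendsto_diff[OF Y] tendsto_const tendsto_ident_at)
  have U0: "0 \<in> U" using S by (simp add: U_def)
  obtain V where V: "open V" "g0 \<in> V" and VU: "\<And>U. open U \<Longrightarrow> (0::'y) \<in> U \<Longrightarrow>
        (\<exists>W. open W \<and> (0::'g) \<in> W \<and> (\<forall>x\<in>V. \<forall>y\<in>V. - x + y \<in> W \<longrightarrow> \<psi> x - \<psi> y \<in> U))"
    using psi[unfolded LUC_loc_def mem_Collect_eq, rule_format, of g0] by metis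
  obtain W where W: "open W" "0 \<in> W" "\<forall>x\<in>V. \<forall>y\<in>V. - x + y \<in> W \<longrightarrow> \<psi> x - \<psi> y \<in> U"
    using VU[OF Uo U0] by blast
  define A where "A = V \<inter> {y. - g0 + y \<in> W}"
  have "open A" unfolding A_def using G_open_translate[OF G W(1), of "- g0"] V(1) by auto
  moreover have "g0 \<in> A" unfolding A_def using V W by simp
  moreover have "\<forall>y\<in>A. \<psi> y \<in> S"
  proof
    fix y assume "y \<in> A"
    then have "\<psi> g0 - \<psi> y \<in> U" using W(3) V(2) unfolding A_def by blast
    then show "\<psi> y \<in> S" unfolding U_def by simp
  qed
  ultimately show "eventually (\<lambda>y. \<psi> y \<in> S) (at g0)"
    unfolding eventually_at_topological by blast
qed

lemma gpow_0[simp]: "gpow x 0 = 0" by (simp add: gpow_def)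
lemma gpow_Suc: "gpow x (Suc n) = x + gpow x n" by (simp add: gpow_def)
lemma gpow_Suc_right: "gpow x (Suc n) = gpow x n + x"
proof (induction n)
  case 0 then show ?case by (simp add: gpow_Suc)
next
  case (Suc n)
  have "gpow x (Suc (Suc n)) = x + (gpow x n + x)" using Suc by (simp add: gpow_Suc)
  also have "\<dots> = gpow x (Suc n) + x" by (simp add: gpow_Suc add.assoc)
  finally show ?case .
qed
lemma gpow_zero[simp]: "gpow 0 n = 0" by (induction n) (simp_all add: gpow_Suc)

lemma gpow_tendsto:
  fixes f :: "'a \<Rightarrow> 'g::{group_add, t2_space}"
  assumes G: "topological_group TYPE('g)" and "(f \<longlongrightarrow> a) F"
  shows "((\<lambda>x. gpow (f x) n) \<longlongrightarrow> gpow a n) F"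
proof (induction n)
  case 0 then show ?case by simp
next
  case (Suc n) then show ?case unfolding gpow_Suc by (intro G_tendsto_add[OF G] assms(2) Suc.IH)
qed

lemma deriv_exists:
  fixes \<phi> :: "'g::{group_add, t2_space} \<Rightarrow> 'y::{real_vector, t2_space}"
  assumes "\<phi> \<in> LUC1_loc" "X \<in> oneps TYPE('g)"
  shows "has_left_deriv \<phi> X x (left_deriv \<phi> X x)"
proof -
  obtain D where D: "has_left_deriv \<phi> X x D" using assms unfolding LUC1_loc_def by blast
  then have "left_deriv \<phi> X x = D" unfolding has_left_deriv_def left_deriv_def
    by (intro tendsto_Lim) auto
  then show ?thesis using D by simp
qed

lemma term_est:
  fixes \<phi> :: "'g::{group_add, t2_space} \<Rightarrow> 'y::{real_vector, t2_space}"
  assumes G: "topological_group TYPE('g)" and Y: "metrizable_lcs TYPE('y)"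
    and phic: "\<And>x. (\<phi> \<longlongrightarrow> \<phi> x) (at x)" and X: "X \<in> oneps TYPE('g)"
    and hd: "\<And>x. has_left_deriv \<phi> X x (D x)" and u: "0 < u" and W: "convex W" "open W"
    and hyp: "\<And>r. 0 \<le> r \<Longrightarrow> r \<le> u \<Longrightarrow> D (h + X r) - c \<in> W"
  shows "\<exists>x\<in>closure W. \<phi> (h + X u) - \<phi> h - u *\<^sub>R c = u *\<^sub>R x"
proof -
  define \<psi> where "\<psi> r = \<phi> (h + X r) - r *\<^sub>R c" for r
  have phic': "\<And>F f l. (f \<longlongrightarrow> l) F \<Longrightarrow> ((\<lambda>x. \<phi> (f x)) \<longlongrightarrow> \<phi> l) F"
    by (rule isCont_tendsto_compose) (simp_all add: isCont_def phic)
  have "continuous_on {0..u} \<psi>"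
  proof (rule contI)
    fix r
    show "(\<psi> \<longlongrightarrow> \<psi> r) (at r)" unfolding \<psi>_def
      by (intro Y_tendsto_diff[OF Y] Y_tendsto_scaleR[OF Y] phic' G_tendsto_add[OF G]
          tendsto_const tendsto_ident_at oneps_cont[OF X])
  qed
  moreover have "\<exists>d\<in>W. ((\<lambda>v. (1/v) *\<^sub>R (\<psi> (r+v) - \<psi> r)) \<longlongrightarrow> d) (at_right 0)"
    if r: "0 \<le> r" "r < u" for r
  proof (intro bexI)
    have "((\<lambda>v. (1/v) *\<^sub>R (\<phi> ((h + X r) + X v) - \<phi> (h + X r))) \<longlongrightarrow> D (h + X r)) (at 0)"
      using hd[of "h + X r"] by (simp add: has_left_deriv_def)
    then have "((\<lambda>v. (1/v) *\<^sub>R (\<phi> ((h + X r) + X v) - \<phi> (h + X r))) \<longlongrightarrow> D (h + X r)) (at_right 0)"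
      by (rule tendsto_mono[OF at_le, rotated]) simp
    then have L: "((\<lambda>v. (1/v) *\<^sub>R (\<phi> ((h + X r) + X v) - \<phi> (h + X r)) - c) \<longlongrightarrow> D (h + X r) - c) (at_right 0)"
      by (intro Y_tendsto_diff[OF Y] tendsto_const)
    have E: "eventually (\<lambda>v. (1/v) *\<^sub>R (\<phi> ((h + X r) + X v) - \<phi> (h + X r)) - c =
                            (1/v) *\<^sub>R (\<psi> (r+v) - \<psi> r)) (at_right 0)"
      using eventually_at_right_less[of "0::real"]
    proof (rule eventually_mono)
      fix v :: real assume v: "0 < v"
      have "\<psi> (r+v) - \<psi> r = (\<phi> ((h + X r) + X v) - \<phi> (h + X r)) - v *\<^sub>R c"
        unfolding \<psi>_def oneps_add[OF X] by (simp add: add.assoc scaleR_add_left algebra_simps)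
      then show "(1/v) *\<^sub>R (\<phi> ((h + X r) + X v) - \<phi> (h + X r)) - c = (1/v) *\<^sub>R (\<psi> (r+v) - \<psi> r)"
        using v by (simp add: scaleR_diff_right)
    qed
    show "((\<lambda>v. (1/v) *\<^sub>R (\<psi> (r+v) - \<psi> r)) \<longlongrightarrow> D (h + X r) - c) (at_right 0)"
      using tendsto_cong[OF E] L by simp
    show "D (h + X r) - c \<in> W" using hyp r by simp
  qed
  ultimately obtain x where "x \<in> closure W" "\<psi> u - \<psi> 0 = u *\<^sub>R x"
    using mvt_convex[OF Y u W(1) W(2), of \<psi>] by blast
  moreover have "\<psi> u - \<psi> 0 = \<phi> (h + X u) - \<phi> h - u *\<^sub>R c"
    unfolding \<psi>_def using oneps_0[OF X] by (simp add: algebra_simps)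
  ultimately show ?thesis by auto
qed



lemma small_partial:
  fixes X1 X2 Z :: "real \<Rightarrow> 'g::{group_add,t2_space}"
  assumes G: "topological_group TYPE('g)" and X1: "X1 \<in> oneps TYPE('g)" and X2: "X2 \<in> oneps TYPE('g)"
    and Z: "Z \<in> oneps TYPE('g)"
    and conv: "unif_compact_conv (\<lambda>n t. gpow (X1 (t / real n) + X2 (t / real n)) n) Z"
    and Om: "open Om" "0 \<in> Om"
  shows "\<exists>t0>0. \<forall>t. 0 < t \<longrightarrow> t < t0 \<longrightarrow> (\<forall>\<^sub>F n in sequentially. 0 < n \<and> (\<forall>k<n. \<forall>r\<in>{0..t/real n}.
            gpow (X1 (t/real n) + X2 (t/real n)) k + X1 r \<in> Om \<and>
            gpow (X1 (t/real n) + X2 (t/real n)) k + (X1 (t/real n) + X2 r) \<in> Om))"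
proof -
  obtain E1 where E1: "open E1" "0 \<in> E1" "\<forall>a\<in>E1. \<forall>b\<in>E1. a + b \<in> Om"
    using G_small_sum[OF G Om] by blast
  obtain E2 where E2: "open E2" "0 \<in> E2" "\<forall>a\<in>E2. \<forall>b\<in>E2. a + b \<in> E1"
    using G_small_sum[OF G E1(1,2)] by blast
  have E2sub: "x \<in> E1" if "x \<in> E2" for x using E2 that by (metis add.right_neutral)
  have "compact {0..1::real}" by simp
  then have "\<forall>\<^sub>F k in sequentially. \<forall>t'\<in>{0..1::real}. - Z t' + gpow (X1 (t' / real k) + X2 (t' / real k)) k \<in> E2"
    using conv E2(1,2) unfolding unif_compact_conv_def by blast
  then obtain N0 where N0: "\<And>k t'. k \<ge> N0 \<Longrightarrow> t' \<in> {0..1} \<Longrightarrow> - Z t' + gpow (X1 (t' / real k) + X2 (t' / real k)) k \<in> E2"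
    unfolding eventually_sequentially by blast
  have Qev: "\<forall>\<^sub>F q in nhds 0. \<forall>k\<in>{..N0}. gpow q k \<in> E1"
  proof (rule eventually_ball_finite[OF finite_atMost], rule ballI)
    fix k
    have "((\<lambda>q. gpow q k) \<longlongrightarrow> gpow (0::'g) k) (nhds 0)"
      by (rule gpow_tendsto[OF G filterlim_ident])
    then show "\<forall>\<^sub>F q in nhds 0. gpow q k \<in> E1" using E1(1,2) by (simp add: topological_tendstoD)
  qed
  have contn: "\<forall>\<^sub>F r in nhds (0::real). X r \<in> E2" if X: "X \<in> oneps TYPE('g)" for X
  proof -
    have "(X \<longlongrightarrow> X 0) (nhds 0)" using oneps_cont[OF X, of 0] by (simp add: tendsto_at_iff_tendsto_nhds)
    then show ?thesis using E2(1,2) oneps_0[OF X] by (simp add: topological_tendstoD)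
  qed
  have "\<forall>\<^sub>F r in nhds (0::real). Z r \<in> E2 \<and> X1 r \<in> E2 \<and> X2 r \<in> E2"
    by (intro eventually_conj contn Z X1 X2)
  then obtain d where d: "d > 0" "\<And>r. dist r 0 < d \<Longrightarrow> Z r \<in> E2 \<and> X1 r \<in> E2 \<and> X2 r \<in> E2"
    unfolding eventually_nhds_metric by blast
  define t0 where "t0 = min 1 d"
  have small: "Z r \<in> E2 \<and> X1 r \<in> E2 \<and> X2 r \<in> E2" if "0 \<le> r" "r < t0" for r
    using d(2)[of r] that by (auto simp: t0_def dist_real_def)
  show ?thesis
  proof (intro exI[of _ t0] conjI allI impI)
    show "0 < t0" using d by (simp add: t0_def)
    fix t :: real assume t: "0 < t" "t < t0"
    define p where "p n = X1 (t / real n) + X2 (t / real n)" for n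
    have tn: "(\<lambda>n. t / real n) \<longlonglongrightarrow> 0"
      by (intro tendsto_divide_0[OF tendsto_const] filterlim_at_top_imp_at_infinity filterlim_real_sequentially)
    have "(\<lambda>n. X1 (t / real n) + X2 (t / real n)) \<longlonglongrightarrow> X1 0 + X2 0"
      by (intro G_tendsto_add[OF G] isCont_tendsto_compose[OF _ tn])
         (simp_all add: isCont_def oneps_cont X1 X2)
    then have "p \<longlonglongrightarrow> 0" using oneps_0[OF X1] oneps_0[OF X2] by (simp add: p_def[abs_def])
    then have evQ: "\<forall>\<^sub>F n in sequentially. \<forall>k\<in>{..N0}. gpow (p n) k \<in> E1"
      using eventually_compose_filterlim[OF Qev] by blast
    show "\<forall>\<^sub>F n in sequentially. 0 < n \<and> (\<forall>k<n. \<forall>r\<in>{0..t/real n}.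
            gpow (X1 (t/real n) + X2 (t/real n)) k + X1 r \<in> Om \<and>
            gpow (X1 (t/real n) + X2 (t/real n)) k + (X1 (t/real n) + X2 r) \<in> Om)"
      using evQ eventually_gt_at_top[of "0::nat"]
    proof (rule eventually_elim2)
      fix n :: nat assume Q: "\<forall>k\<in>{..N0}. gpow (p n) k \<in> E1" and n: "0 < n"
      define u where "u = t / real n"
      have u: "0 < u" "u \<le> t" using t n by (auto simp: u_def field_simps)
      have gk: "gpow (p n) k \<in> E1" if k: "k < n" for k
      proof (cases "k \<le> N0")
        case True then show ?thesis using Q by simp
      next
        case False
        then have kpos: "0 < k" "N0 \<le> k" by auto
        define t' where "t' = t * real k / real n"
        have t'01: "0 \<le> t'" "t' \<le> t" using t k n by (auto simp: t'_def field_simps)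
        have "t' / real k = t / real n" using kpos by (simp add: t'_def)
        then have "- Z t' + gpow (p n) k \<in> E2"
          using N0[OF kpos(2), of t'] t'01 t by (auto simp: p_def t0_def)
        moreover have "Z t' \<in> E2" using small[of t'] t'01 t by auto
        ultimately have "Z t' + (- Z t' + gpow (p n) k) \<in> E1" using E2(3) by blast
        then show ?thesis by (simp add: add.assoc[symmetric])
      qed
      show "0 < n \<and> (\<forall>k<n. \<forall>r\<in>{0..t/real n}.
            gpow (X1 (t/real n) + X2 (t/real n)) k + X1 r \<in> Om \<and>
            gpow (X1 (t/real n) + X2 (t/real n)) k + (X1 (t/real n) + X2 r) \<in> Om)"
      proof (intro conjI allI impI ballI n)
        fix k r assume k: "k < n" and r: "r \<in> {0..t/real n}"
        have r': "0 \<le> r" "r < t0" using r u t unfolding u_def by auto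
        have x1r: "X1 r \<in> E2" "X2 r \<in> E2" using small[OF r'] by auto
        have "X1 u \<in> E2" using small[of u] u t by auto
        then have "X1 u + X2 r \<in> E1" using x1r E2(3) by blast
        then show "gpow (X1 (t/real n) + X2 (t/real n)) k + (X1 (t/real n) + X2 r) \<in> Om"
          using gk[OF k] E1(3) by (auto simp: p_def u_def)
        show "gpow (X1 (t/real n) + X2 (t/real n)) k + X1 r \<in> Om"
          using gk[OF k] E1(3) E2sub x1r by (auto simp: p_def)
      qed
    qed
  qed
qed



lemma one_sided:
  fixes \<phi> :: "'g::{group_add, t2_space} \<Rightarrow> 'y::{real_vector, t2_space}"
    and X1 X2 Z :: "real \<Rightarrow> 'g"
  assumes G: "topological_group TYPE('g)" and Y: "metrizable_lcs TYPE('y)"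
    and phi: "\<phi> \<in> LUC1_loc"
    and X1: "X1 \<in> oneps TYPE('g)" and X2: "X2 \<in> oneps TYPE('g)" and Z: "Z \<in> oneps TYPE('g)"
    and conv: "unif_compact_conv (\<lambda>n t. gpow (X1 (t / real n) + X2 (t / real n)) n) Z"
  shows "((\<lambda>t. (1/t) *\<^sub>R (\<phi> (g + Z t) - \<phi> g)) \<longlongrightarrow> left_deriv \<phi> X1 g + left_deriv \<phi> X2 g) (at_right 0)"
proof (rule topological_tendstoI)
  define D1 where "D1 = left_deriv \<phi> X1"
  define D2 where "D2 = left_deriv \<phi> X2"
  define c1 where "c1 = D1 g"
  define c2 where "c2 = D2 g"
  have phiL: "\<phi> \<in> LUC_loc" using phi by (simp add: LUC1_loc_def)
  have D1L: "D1 \<in> LUC_loc" using phi X1 by (simp add: LUC1_loc_def D1_def)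
  have D2L: "D2 \<in> LUC_loc" using phi X2 by (simp add: LUC1_loc_def D2_def)
  have phic: "\<And>x. (\<phi> \<longlongrightarrow> \<phi> x) (at x)" by (rule LUC_cont[OF G Y phiL])
  have hd1: "\<And>x. has_left_deriv \<phi> X1 x (D1 x)" unfolding D1_def by (rule deriv_exists[OF phi X1])
  have hd2: "\<And>x. has_left_deriv \<phi> X2 x (D2 x)" unfolding D2_def by (rule deriv_exists[OF phi X2])
  fix S assume S: "open S" "left_deriv \<phi> X1 g + left_deriv \<phi> X2 g \<in> S"
  define c where "c = c1 + c2"
  have cS: "c \<in> S" using S by (simp add: c_def c1_def c2_def D1_def D2_def)
  define U where "U = (\<lambda>y. y + c) -` S"
  have Uo: "open U" unfolding U_def
    by (rule open_vimage_cont[OF _ S(1)]) (intro Y_tendsto_add[OF Y] tendsto_const tendsto_ident_at)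
  have U0: "0 \<in> U" using cS by (simp add: U_def)
  obtain U1 where U1: "open U1" "0 \<in> U1" "closure U1 \<subseteq> U" using regular_shrink[OF Y Uo U0] by blast
  obtain W0 where W0: "open W0" "0 \<in> W0" "\<forall>a\<in>W0. \<forall>b\<in>W0. a + b \<in> U1"
    using Y_small_sum[OF Y U1(1,2)] by blast
  obtain W where W: "open W" "convex W" "0 \<in> W" "W \<subseteq> W0"
    using Y W0(1,2) unfolding metrizable_lcs_def by blast
  define K where "K = (\<lambda>p::'y\<times>'y. fst p + snd p) ` (closure W \<times> closure W)"
  have cW: "convex (closure W)" by (rule Y_convex_closure[OF Y W(2)])
  have Kconv: "convex K" unfolding convex_def
  proof (intro ballI allI impI)
    fix x y and a b :: real assume x: "x \<in> K" and y: "y \<in> K" and ab: "0 \<le> a" "0 \<le> b" "a + b = 1"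
    obtain x1 x2 where x12: "x1 \<in> closure W" "x2 \<in> closure W" "x = x1 + x2" using x by (auto simp: K_def)
    obtain y1 y2 where y12: "y1 \<in> closure W" "y2 \<in> closure W" "y = y1 + y2" using y by (auto simp: K_def)
    have "a *\<^sub>R x1 + b *\<^sub>R y1 \<in> closure W" "a *\<^sub>R x2 + b *\<^sub>R y2 \<in> closure W"
      using cW x12 y12 ab unfolding convex_def by blast+
    moreover have "a *\<^sub>R x + b *\<^sub>R y = (a *\<^sub>R x1 + b *\<^sub>R y1) + (a *\<^sub>R x2 + b *\<^sub>R y2)"
      using x12 y12 by (simp add: algebra_simps)
    ultimately show "a *\<^sub>R x + b *\<^sub>R y \<in> K" unfolding K_def by force
  qed
  have addc: "continuous_on A (\<lambda>p::'y\<times>'y. fst p + snd p)" for A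
    by (intro contI Y_tendsto_add[OF Y] tendsto_fst tendsto_snd tendsto_ident_at)
  have "(\<lambda>p::'y\<times>'y. fst p + snd p) ` (W \<times> W) \<subseteq> closure U1"
    using W(4) W0(3) closure_subset by fastforce
  then have "(\<lambda>p::'y\<times>'y. fst p + snd p) ` closure (W \<times> W) \<subseteq> closure U1"
    using image_closure_subset[OF addc closed_closure] by blast
  then have "K \<subseteq> closure U1" by (simp add: K_def closure_Times)
  then have KU: "closure K \<subseteq> U" using U1(3) by (meson closure_minimal closed_closure order_trans)
  define N where "N = {x. D1 x - c1 \<in> W} \<inter> {x. D2 x - c2 \<in> W}"
  have No: "open N" unfolding N_def
  proof (intro open_Int)
    show "open {x. D1 x - c1 \<in> W}"
      using open_vimage_cont[OF _ W(1), of "\<lambda>x. D1 x - c1"]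
      by (simp add: vimage_def Y_tendsto_diff[OF Y LUC_cont[OF G Y D1L] tendsto_const])
    show "open {x. D2 x - c2 \<in> W}"
      using open_vimage_cont[OF _ W(1), of "\<lambda>x. D2 x - c2"]
      by (simp add: vimage_def Y_tendsto_diff[OF Y LUC_cont[OF G Y D2L] tendsto_const])
  qed
  define Om where "Om = {w. g + w \<in> N}"
  have Omo: "open Om" unfolding Om_def by (rule G_open_translate[OF G No])
  have Om0: "0 \<in> Om" using W(3) by (simp add: Om_def N_def c1_def c2_def)
  obtain t0 where t0: "t0 > 0" and t0P: "\<And>t. 0 < t \<Longrightarrow> t < t0 \<Longrightarrow> (\<forall>\<^sub>F n in sequentially. 0 < n \<and> (\<forall>k<n. \<forall>r\<in>{0..t/real n}.
            gpow (X1 (t/real n) + X2 (t/real n)) k + X1 r \<in> Om \<and>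
            gpow (X1 (t/real n) + X2 (t/real n)) k + (X1 (t/real n) + X2 r) \<in> Om))"
    using small_partial[OF G X1 X2 Z conv Omo Om0] by blast
  have main: "(1/t) *\<^sub>R (\<phi> (g + Z t) - \<phi> g) - c \<in> closure K" if t: "0 < t" "t < t0" for t
  proof -
    define p where "p n = X1 (t / real n) + X2 (t / real n)" for n
    define P where "P n = gpow (p n) n" for n
    have inK: "\<forall>\<^sub>F n in sequentially. (1/t) *\<^sub>R (\<phi> (g + P n) - \<phi> g) - c \<in> K"
      using t0P[OF t]
    proof (rule eventually_mono)
      fix n assume "0 < n \<and> (\<forall>k<n. \<forall>r\<in>{0..t/real n}.
            gpow (X1 (t/real n) + X2 (t/real n)) k + X1 r \<in> Om \<and>
            gpow (X1 (t/real n) + X2 (t/real n)) k + (X1 (t/real n) + X2 r) \<in> Om)"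
      then have n: "0 < n" and H: "\<And>k r. k < n \<Longrightarrow> r \<in> {0..t/real n} \<Longrightarrow>
            gpow (p n) k + X1 r \<in> Om \<and> gpow (p n) k + (X1 (t/real n) + X2 r) \<in> Om"
        by (auto simp: p_def)
      define u where "u = t / real n"
      have u: "0 < u" using t n by (simp add: u_def)
      have step: "\<exists>z. z \<in> K \<and> \<phi> (g + gpow (p n) (Suc k)) - \<phi> (g + gpow (p n) k) = u *\<^sub>R (c + z)"
        if k: "k < n" for k
      proof -
        define h where "h = g + gpow (p n) k"
        have "\<exists>x\<in>closure W. \<phi> (h + X1 u) - \<phi> h - u *\<^sub>R c1 = u *\<^sub>R x"
        proof (rule term_est[OF G Y phic X1 hd1 u W(2) W(1)])
          fix r assume "0 \<le> r" "r \<le> u"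
          then have "gpow (p n) k + X1 r \<in> Om" using H[OF k, of r] by (simp add: u_def)
          then show "D1 (h + X1 r) - c1 \<in> W" by (simp add: Om_def N_def h_def add.assoc)
        qed
        then obtain x1 where x1: "x1 \<in> closure W" "\<phi> (h + X1 u) - \<phi> h - u *\<^sub>R c1 = u *\<^sub>R x1" by blast
        have "\<exists>x\<in>closure W. \<phi> ((h + X1 u) + X2 u) - \<phi> (h + X1 u) - u *\<^sub>R c2 = u *\<^sub>R x"
        proof (rule term_est[OF G Y phic X2 hd2 u W(2) W(1)])
          fix r assume "0 \<le> r" "r \<le> u"
          then have "gpow (p n) k + (X1 u + X2 r) \<in> Om" using H[OF k, of r] by (simp add: u_def)
          then show "D2 ((h + X1 u) + X2 r) - c2 \<in> W" by (simp add: Om_def N_def h_def add.assoc)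
        qed
        then obtain x2 where x2: "x2 \<in> closure W" "\<phi> ((h + X1 u) + X2 u) - \<phi> (h + X1 u) - u *\<^sub>R c2 = u *\<^sub>R x2" by blast
        have e: "g + gpow (p n) (Suc k) = (h + X1 u) + X2 u"
          by (simp add: gpow_Suc_right h_def p_def u_def add.assoc)
        have "\<phi> (g + gpow (p n) (Suc k)) - \<phi> (g + gpow (p n) k)
              = (\<phi> ((h + X1 u) + X2 u) - \<phi> (h + X1 u) - u *\<^sub>R c2) + (\<phi> (h + X1 u) - \<phi> h - u *\<^sub>R c1) + u *\<^sub>R c"
          unfolding e by (simp add: h_def c_def scaleR_add_right)
        also have "\<dots> = u *\<^sub>R (c + (x1 + x2))" using x1(2) x2(2) by (simp add: algebra_simps)
        finally show ?thesis using x1(1) x2(1) unfolding K_def by force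
      qed
      then have "\<forall>k\<in>{..<n}. \<exists>z. z \<in> K \<and> \<phi> (g + gpow (p n) (Suc k)) - \<phi> (g + gpow (p n) k) = u *\<^sub>R (c + z)"
        by blast
      then obtain z where z: "\<forall>k\<in>{..<n}. z k \<in> K \<and> \<phi> (g + gpow (p n) (Suc k)) - \<phi> (g + gpow (p n) k) = u *\<^sub>R (c + z k)"
        by (metis bchoice)
      have "\<phi> (g + P n) - \<phi> g = (\<Sum>k<n. \<phi> (g + gpow (p n) (Suc k)) - \<phi> (g + gpow (p n) k))"
        using sum_lessThan_telescope[of "\<lambda>k. \<phi> (g + gpow (p n) k)" n] by (simp add: P_def)
      also have "\<dots> = (\<Sum>k<n. u *\<^sub>R (c + z k))" using z by (intro sum.cong) auto
      also have "\<dots> = u *\<^sub>R (real n *\<^sub>R c + (\<Sum>k<n. z k))"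
        by (simp add: scaleR_sum_right[symmetric] sum.distrib sum_constant_scaleR)
      finally have eq: "\<phi> (g + P n) - \<phi> g = u *\<^sub>R (real n *\<^sub>R c + (\<Sum>k<n. z k))" .
      have "(1/t) *\<^sub>R (\<phi> (g + P n) - \<phi> g) - c = (\<Sum>k<n. (1 / real n) *\<^sub>R z k)"
        unfolding eq using t n by (simp add: u_def scaleR_add_right scaleR_sum_right)
      moreover have "(\<Sum>k<n. (1 / real n) *\<^sub>R z k) \<in> K"
        by (rule convex_sum[OF finite_lessThan Kconv]) (use n z in auto)
      ultimately show "(1/t) *\<^sub>R (\<phi> (g + P n) - \<phi> g) - c \<in> K" by simp
    qed
    have "\<forall>\<^sub>F n in sequentially. - Z t + P n \<in> V" if "open V" "0 \<in> V" for V
    proof -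
      have "compact {t}" by simp
      then have "\<forall>\<^sub>F n in sequentially. \<forall>t'\<in>{t}. - Z t' + gpow (X1 (t' / real n) + X2 (t' / real n)) n \<in> V"
        using conv that unfolding unif_compact_conv_def by blast
      then show ?thesis by (simp add: P_def p_def)
    qed
    then have "(\<lambda>n. - Z t + P n) \<longlonglongrightarrow> 0" by (rule topological_tendstoI)
    then have "(\<lambda>n. Z t + (- Z t + P n)) \<longlonglongrightarrow> Z t + 0" by (intro G_tendsto_add[OF G] tendsto_const)
    then have "P \<longlonglongrightarrow> Z t" by (simp add: add.assoc[symmetric])
    then have "(\<lambda>n. g + P n) \<longlonglongrightarrow> g + Z t" by (intro G_tendsto_add[OF G] tendsto_const)
    then have "(\<lambda>n. \<phi> (g + P n)) \<longlonglongrightarrow> \<phi> (g + Z t)"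
      by (rule isCont_tendsto_compose[rotated]) (simp add: isCont_def phic)
    then have lim: "(\<lambda>n. (1/t) *\<^sub>R (\<phi> (g + P n) - \<phi> g) - c) \<longlonglongrightarrow> (1/t) *\<^sub>R (\<phi> (g + Z t) - \<phi> g) - c"
      by (intro Y_tendsto_diff[OF Y] Y_tendsto_scaleR[OF Y] tendsto_const)
    have inK': "\<forall>\<^sub>F n in sequentially. (1/t) *\<^sub>R (\<phi> (g + P n) - \<phi> g) - c \<in> closure K"
      using inK by (rule eventually_mono) (use closure_subset in blast)
    show ?thesis by (rule Lim_in_closed_set[OF closed_closure inK' trivial_limit_sequentially lim])
  qed
  show "\<forall>\<^sub>F t in at_right 0. (1/t) *\<^sub>R (\<phi> (g + Z t) - \<phi> g) \<in> S"
    unfolding eventually_at_right_field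
  proof (intro exI[of _ t0] conjI allI impI)
    show "0 < t0" by (rule t0)
    fix t :: real assume "0 < t" "t < t0"
    then have "(1/t) *\<^sub>R (\<phi> (g + Z t) - \<phi> g) - c \<in> U" using main KU by blast
    then show "(1/t) *\<^sub>R (\<phi> (g + Z t) - \<phi> g) \<in> S" by (simp add: U_def)
  qed
qed



lemma cm_binop:
  fixes h :: "'a::topological_space \<Rightarrow> 'b::topological_space \<Rightarrow> 'c::topological_space"
  assumes h: "continuous_on UNIV (\<lambda>p. h (fst p) (snd p))"
    and f: "continuous_map T euclidean f" and g: "continuous_map T euclidean g"
  shows "continuous_map T euclidean (\<lambda>x. h (f x) (g x))"
proof -
  have "continuous_map T (prod_topology euclidean euclidean) (\<lambda>x. (f x, g x))"
    by (rule continuous_map_pairedI[OF f g])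
  then have "continuous_map T euclidean (\<lambda>x. (f x, g x))" by simp
  moreover have "continuous_map euclidean euclidean (\<lambda>p. h (fst p) (snd p))" using h by simp
  ultimately have "continuous_map T euclidean ((\<lambda>p. h (fst p) (snd p)) \<circ> (\<lambda>x. (f x, g x)))"
    by (rule continuous_map_compose)
  then show ?thesis by (simp add: o_def)
qed

lemma Y_diff_cont: "metrizable_lcs TYPE('y::{real_vector,t2_space}) \<Longrightarrow> continuous_on UNIV (\<lambda>p::'y\<times>'y. fst p - snd p)"
  by (intro contI Y_tendsto_diff tendsto_fst tendsto_snd tendsto_ident_at)

lemma Y_small_diff:
  fixes Om :: "'y::{real_vector, t2_space} set"
  assumes Y: "metrizable_lcs TYPE('y)" and "open Om" "0 \<in> Om"
  shows "\<exists>E. open E \<and> 0 \<in> E \<and> (\<forall>a\<in>E. \<forall>b\<in>E. a - b \<in> Om)"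
proof -
  have "open ((\<lambda>p::'y \<times> 'y. fst p - snd p) -` Om)" by (rule open_vimage[OF assms(2) Y_diff_cont[OF Y]])
  moreover have "(0,0) \<in> (\<lambda>p::'y \<times> 'y. fst p - snd p) -` Om" using assms by simp
  ultimately obtain A B where "open A" "open B" "(0,0) \<in> A \<times> B" "A \<times> B \<subseteq> (\<lambda>p::'y \<times> 'y. fst p - snd p) -` Om"
    by (rule open_prod_elim)
  then show ?thesis by (intro exI[of _ "A \<inter> B"]) auto
qed

lemma baire_cont_point:
  fixes T :: "'a topology" and f :: "'a \<Rightarrow> 'y::{real_vector, t2_space}" and fs :: "nat \<Rightarrow> 'a \<Rightarrow> 'y"
  assumes Y: "metrizable_lcs TYPE('y)" and B: "Baire_space T" and ne: "topspace T \<noteq> {}"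
    and fsc: "\<And>m. continuous_map T euclidean (fs m)"
    and lim: "\<And>X. X \<in> topspace T \<Longrightarrow> (\<lambda>m. fs m X) \<longlonglongrightarrow> f X"
    and U: "open U" "0 \<in> U"
  shows "\<exists>X0 O0. openin T O0 \<and> X0 \<in> O0 \<and> (\<forall>X\<in>O0. f X - f X0 \<in> U)"
proof -
  obtain U1 where U1: "open U1" "0 \<in> U1" "closure U1 \<subseteq> U" using regular_shrink[OF Y U] by blast
  obtain E where E: "open E" "0 \<in> E" "\<forall>a\<in>E. \<forall>b\<in>E. a + b \<in> U1" using Y_small_sum[OF Y U1(1,2)] by blast
  obtain E' where E': "open E'" "0 \<in> E'" "\<forall>a\<in>E'. \<forall>b\<in>E'. a - b \<in> E" using Y_small_diff[OF Y E(1,2)] by blast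
  define V where "V = E \<inter> E'"
  have V: "open V" "0 \<in> V" using E E' by (auto simp: V_def)
  define C where "C = closure V"
  have VC: "V \<subseteq> C" by (simp add: C_def closure_subset)
  have abc: "a - b + c \<in> U" if "a \<in> C" "b \<in> C" "c \<in> V" for a b c
  proof -
    define hc where "hc = (\<lambda>p::'y\<times>'y. fst p - snd p + c)"
    have hcc: "continuous_on (closure (V \<times> V)) hc" unfolding hc_def
      by (intro contI Y_tendsto_add[OF Y] Y_tendsto_diff[OF Y] tendsto_fst tendsto_snd tendsto_ident_at tendsto_const)
    have "hc ` (V \<times> V) \<subseteq> closure U1"
    proof (clarsimp simp: hc_def)
      fix a' b' assume "a' \<in> V" "b' \<in> V"
      then have "a' - b' \<in> E" using E' by (auto simp: V_def)
      then have "a' - b' + c \<in> U1" using E(3) that(3) by (auto simp: V_def)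
      then show "a' - b' + c \<in> closure U1" using closure_subset by blast
    qed
    then have "hc ` closure (V \<times> V) \<subseteq> closure U1" using image_closure_subset[OF hcc closed_closure] by blast
    then have "hc (a, b) \<in> closure U1" using that by (auto simp: closure_Times C_def)
    then show ?thesis using U1(3) by (auto simp: hc_def)
  qed
  obtain V2 where V2: "open V2" "0 \<in> V2" "\<forall>a\<in>V2. \<forall>b\<in>V2. a - b \<in> V" using Y_small_diff[OF Y V] by blast
  define EN where "EN N = {X \<in> topspace T. \<forall>m\<ge>N. fs m X - fs N X \<in> C}" for N
  have diffc: "continuous_map T euclidean (\<lambda>X. fs m X - fs N X)" for m N
    by (rule cm_binop[OF Y_diff_cont[OF Y] fsc fsc])
  have ENc: "closedin T (EN N)" for N
  proof -
    have "EN N = topspace T \<inter> (\<Inter>m\<in>{N..}. {X \<in> topspace T. fs m X - fs N X \<in> C})"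
      by (auto simp: EN_def)
    moreover have "closedin T {X \<in> topspace T. fs m X - fs N X \<in> C}" for m
      by (rule closedin_continuous_map_preimage[OF diffc]) (simp add: C_def)
    ultimately show ?thesis by (auto intro!: closedin_Inter closedin_topspace closedin_Int)
  qed
  have cover: "\<exists>N. X \<in> EN N" if X: "X \<in> topspace T" for X
  proof -
    have "(\<lambda>m. fs m X - f X) \<longlonglongrightarrow> f X - f X" by (intro Y_tendsto_diff[OF Y] lim X tendsto_const)
    then have "\<forall>\<^sub>F m in sequentially. fs m X - f X \<in> V2" using V2 by (simp add: topological_tendstoD)
    then obtain N where N: "\<And>m. m \<ge> N \<Longrightarrow> fs m X - f X \<in> V2" unfolding eventually_sequentially by blast
    have "fs m X - fs N X \<in> C" if "m \<ge> N" for m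
    proof -
      have "(fs m X - f X) - (fs N X - f X) \<in> V" using V2(3) N[OF that] N[of N] by blast
      then show ?thesis using VC by auto
    qed
    then show ?thesis using X by (auto simp: EN_def)
  qed
  have "\<exists>N. T interior_of (EN N) \<noteq> {}"
  proof (rule ccontr)
    assume "\<not> (\<exists>N. T interior_of (EN N) \<noteq> {})"
    then have int0: "\<And>N. T interior_of (EN N) = {}" by blast
    define GN where "GN N = topspace T - EN N" for N
    have "\<forall>N. openin T (GN N) \<and> T closure_of (GN N) = topspace T"
      using ENc int0 by (auto simp: GN_def closure_of_complement openin_diff)
    then have "T closure_of (topspace T \<inter> (\<Inter>N. GN N)) = topspace T"
      using B unfolding Baire_space_def by blast
    then have "topspace T \<inter> (\<Inter>N. GN N) \<noteq> {}" using ne by (metis closure_of_empty)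
    then obtain X where "X \<in> topspace T" "\<And>N. X \<notin> EN N" by (auto simp: GN_def)
    then show False using cover by blast
  qed
  then obtain N X0 where X0: "X0 \<in> T interior_of (EN N)" by blast
  define O0 where "O0 = T interior_of (EN N) \<inter> {X \<in> topspace T. fs N X - fs N X0 \<in> V}"
  have "openin T O0" unfolding O0_def
  proof (rule openin_Int)
    show "openin T (T interior_of EN N)" by simp
    have cc: "continuous_map T euclidean (\<lambda>X. fs N X0)" by (simp add: continuous_map_const)
    have "continuous_map T euclidean (\<lambda>X. fs N X - fs N X0)"
      by (rule cm_binop[OF Y_diff_cont[OF Y] fsc cc])
    moreover have "openin euclidean V" using V(1) by simp
    ultimately show "openin T {X \<in> topspace T. fs N X - fs N X0 \<in> V}"
      by (rule openin_continuous_map_preimage)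
  qed
  moreover have X0T: "X0 \<in> topspace T" using X0 interior_of_subset_topspace[of T "EN N"] by blast
  moreover have "X0 \<in> O0" unfolding O0_def using X0 X0T V(2) by simp
  moreover have inC: "f X - fs N X \<in> C" if "X \<in> T interior_of (EN N)" for X
  proof -
    have XE: "X \<in> EN N" using that interior_of_subset[of T "EN N"] by blast
    then have XT: "X \<in> topspace T" and XA: "\<forall>m\<ge>N. fs m X - fs N X \<in> C" unfolding EN_def by auto
    have L: "(\<lambda>m. fs m X - fs N X) \<longlonglongrightarrow> f X - fs N X" by (intro Y_tendsto_diff[OF Y] lim XT tendsto_const)
    have Ev: "\<forall>\<^sub>F m in sequentially. fs m X - fs N X \<in> C"
      unfolding eventually_sequentially using XA by blast
    have cC: "closed C" by (simp add: C_def)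
    show ?thesis by (rule Lim_in_closed_set[OF cC Ev trivial_limit_sequentially L])
  qed
  moreover have "\<forall>X\<in>O0. f X - f X0 \<in> U"
  proof
    fix X assume X: "X \<in> O0"
    have XI: "X \<in> T interior_of (EN N)" using X unfolding O0_def by blast
    have XV: "fs N X - fs N X0 \<in> V" using X unfolding O0_def by blast
    have "(f X - fs N X) - (f X0 - fs N X0) + (fs N X - fs N X0) \<in> U"
      by (rule abc[OF inC[OF XI] inC[OF X0] XV])
    moreover have "(f X - fs N X) - (f X0 - fs N X0) + (fs N X - fs N X0) = f X - f X0"
      by (simp add: algebra_simps)
    ultimately show "f X - f X0 \<in> U" by simp
  qed
  ultimately show ?thesis by (intro exI[of _ X0] exI[of _ O0]) simp
qed

lemma baire_cont:
  fixes T :: "'a topology" and f :: "'a \<Rightarrow> 'y::{real_vector, t2_space}" and fs :: "nat \<Rightarrow> 'a \<Rightarrow> 'y"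
  assumes Y: "metrizable_lcs TYPE('y)" and B: "Baire_space T" and ne: "topspace T \<noteq> {}"
    and fsc: "\<And>m. continuous_map T euclidean (fs m)"
    and lim: "\<And>X. X \<in> topspace T \<Longrightarrow> (\<lambda>m. fs m X) \<longlonglongrightarrow> f X"
    and shift: "\<And>Z X0. Z \<in> topspace T \<Longrightarrow> X0 \<in> topspace T \<Longrightarrow> \<exists>\<tau>. continuous_map T T \<tau> \<and> \<tau> Z = X0 \<and>
                   (\<forall>X\<in>topspace T. f (\<tau> X) = f X - f Z + f X0)"
  shows "continuous_map T euclidean f"
  unfolding continuous_map_def
proof (intro conjI allI impI)
  show "f \<in> topspace T \<rightarrow> topspace euclidean" by simp
  fix S :: "'y set" assume "openin euclidean S"
  then have S: "open S" by simp
  show "openin T {X \<in> topspace T. f X \<in> S}"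
  proof (subst openin_subopen, intro ballI)
    fix Z assume Z: "Z \<in> {X \<in> topspace T. f X \<in> S}"
    define U where "U = (\<lambda>y. y + f Z) -` S"
    have Uo: "open U" unfolding U_def
      by (rule open_vimage_cont[OF _ S]) (intro Y_tendsto_add[OF Y] tendsto_const tendsto_ident_at)
    have U0: "0 \<in> U" using Z by (simp add: U_def)
    obtain X0 O0 where O0: "openin T O0" "X0 \<in> O0" "\<forall>X\<in>O0. f X - f X0 \<in> U"
      using baire_cont_point[OF Y B ne fsc lim Uo U0] by blast
    have X0T: "X0 \<in> topspace T" using O0 openin_subset by blast
    obtain \<tau> where tau: "continuous_map T T \<tau>" "\<tau> Z = X0" "\<forall>X\<in>topspace T. f (\<tau> X) = f X - f Z + f X0"
      using shift[of Z X0] Z X0T by blast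
    define A where "A = {X \<in> topspace T. \<tau> X \<in> O0}"
    have "openin T A" unfolding A_def by (rule openin_continuous_map_preimage[OF tau(1) O0(1)])
    moreover have "Z \<in> A" using Z tau(2) O0(2) by (simp add: A_def)
    moreover have "A \<subseteq> {X \<in> topspace T. f X \<in> S}"
    proof
      fix X assume X: "X \<in> A"
      then have "f (\<tau> X) - f X0 \<in> U" using O0(3) by (simp add: A_def)
      moreover have "f (\<tau> X) - f X0 = f X - f Z" using tau(3) X by (simp add: A_def)
      ultimately have "f X - f Z \<in> U" by simp
      then show "X \<in> {X \<in> topspace T. f X \<in> S}" using X by (simp add: U_def A_def)
    qed
    ultimately show "\<exists>A. openin T A \<and> Z \<in> A \<and> A \<subseteq> {X \<in> topspace T. f X \<in> S}" by blast
  qed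
qed



lemma scale_hd:
  fixes \<phi> :: "'g::{group_add, t2_space} \<Rightarrow> 'y::{real_vector, t2_space}"
  assumes Y: "metrizable_lcs TYPE('y)" and phi: "\<phi> \<in> LUC1_loc" and X: "X \<in> oneps TYPE('g)"
  shows "has_left_deriv \<phi> (\<lambda>s. X (t * s)) g (t *\<^sub>R left_deriv \<phi> X g)"
proof (cases "t = 0")
  case True
  then show ?thesis unfolding has_left_deriv_def using oneps_0[OF X] by simp
next
  case False
  define q where "q w = (1/w) *\<^sub>R (\<phi> (g + X w) - \<phi> g)" for w
  have hq: "(q \<longlongrightarrow> left_deriv \<phi> X g) (at 0)"
    using deriv_exists[OF phi X, of g] unfolding has_left_deriv_def q_def by simp
  have fl: "filterlim (\<lambda>v. t * v) (at 0) (at (0::real))"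
    unfolding filterlim_at
  proof
    show "\<forall>\<^sub>F v in at 0. t * v \<in> UNIV \<and> t * v \<noteq> 0"
      unfolding eventually_at_filter using False by simp
    show "((\<lambda>v. t * v) \<longlongrightarrow> 0) (at 0)"
      using tendsto_mult_right_zero[OF tendsto_ident_at[of "0::real" UNIV], of t] by simp
  qed
  have "((\<lambda>v. q (t * v)) \<longlongrightarrow> left_deriv \<phi> X g) (at 0)" by (rule filterlim_compose[OF hq fl])
  then have L: "((\<lambda>v. t *\<^sub>R q (t * v)) \<longlongrightarrow> t *\<^sub>R left_deriv \<phi> X g) (at 0)"
    by (intro Y_tendsto_scaleR[OF Y] tendsto_const)
  have E: "\<forall>\<^sub>F v in at 0. t *\<^sub>R q (t * v) = (1/v) *\<^sub>R (\<phi> (g + X (t * v)) - \<phi> g)"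
    unfolding eventually_at_filter using False by (simp add: q_def)
  show ?thesis unfolding has_left_deriv_def using tendsto_cong[OF E] L by simp
qed

lemma scale_deriv:
  fixes \<phi> :: "'g::{group_add, t2_space} \<Rightarrow> 'y::{real_vector, t2_space}"
  assumes Y: "metrizable_lcs TYPE('y)" and phi: "\<phi> \<in> LUC1_loc" and X: "X \<in> oneps TYPE('g)"
  shows "left_deriv \<phi> (\<lambda>s. X (t * s)) g = t *\<^sub>R left_deriv \<phi> X g"
  using scale_hd[OF Y phi X, of t g] unfolding has_left_deriv_def left_deriv_def
  by (intro tendsto_Lim) auto

lemma add_deriv:
  fixes add :: "(real \<Rightarrow> 'g::{group_add, t2_space}) \<Rightarrow> (real \<Rightarrow> 'g) \<Rightarrow> (real \<Rightarrow> 'g)"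
    and \<phi> :: "'g \<Rightarrow> 'y::{real_vector, t2_space}"
  assumes G: "topological_group TYPE('g)"
    and vs: "real_vector_space_on (oneps TYPE('g)) add (\<lambda>t X. \<lambda>s. X (t * s))"
    and add_lim: "\<forall>X1\<in>oneps TYPE('g). \<forall>X2\<in>oneps TYPE('g).
                    unif_compact_conv (\<lambda>n t. gpow (X1 (t / real n) + X2 (t / real n)) n) (add X1 X2)"
    and Y: "metrizable_lcs TYPE('y)" and phi: "\<phi> \<in> LUC1_loc"
    and X1: "X1 \<in> oneps TYPE('g)" and X2: "X2 \<in> oneps TYPE('g)"
  shows "left_deriv \<phi> (add X1 X2) g = left_deriv \<phi> X1 g + left_deriv \<phi> X2 g"
proof -
  have addL: "\<And>x y. x \<in> oneps TYPE('g) \<Longrightarrow> y \<in> oneps TYPE('g) \<Longrightarrow> add x y \<in> oneps TYPE('g)"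
    using vs[unfolded real_vector_space_on_def, THEN conjunct1] by blast
  have scL: "\<And>a x. x \<in> oneps TYPE('g) \<Longrightarrow> (\<lambda>s. x (a * s)) \<in> oneps TYPE('g)"
    using vs[unfolded real_vector_space_on_def, THEN conjunct2, THEN conjunct1] by blast
  have dist: "\<And>a x y. x \<in> oneps TYPE('g) \<Longrightarrow> y \<in> oneps TYPE('g) \<Longrightarrow>
      (\<lambda>s. add x y (a * s)) = add (\<lambda>s. x (a * s)) (\<lambda>s. y (a * s))"
    using vs[unfolded real_vector_space_on_def, THEN conjunct2, THEN conjunct2, THEN conjunct2,
      THEN conjunct2, THEN conjunct2, THEN conjunct1] by blast
  define Z where "Z = add X1 X2"
  have Z: "Z \<in> oneps TYPE('g)" unfolding Z_def by (rule addL[OF X1 X2])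
  define D where "D = left_deriv \<phi> X1 g + left_deriv \<phi> X2 g"
  define q where "q t = (1/t) *\<^sub>R (\<phi> (g + Z t) - \<phi> g)" for t
  have R: "(q \<longlongrightarrow> D) (at_right 0)"
    unfolding q_def D_def Z_def
    by (rule one_sided[OF G Y phi X1 X2 addL[OF X1 X2]]) (use add_lim X1 X2 in blast)
  define X1' where "X1' = (\<lambda>s. X1 ((-1) * s))"
  define X2' where "X2' = (\<lambda>s. X2 ((-1) * s))"
  have X1': "X1' \<in> oneps TYPE('g)" unfolding X1'_def by (rule scL[OF X1])
  have X2': "X2' \<in> oneps TYPE('g)" unfolding X2'_def by (rule scL[OF X2])
  have Z': "add X1' X2' = (\<lambda>s. Z ((-1) * s))"
    unfolding X1'_def X2'_def Z_def using dist[OF X1 X2, of "-1"] by simp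
  have "((\<lambda>t. (1/t) *\<^sub>R (\<phi> (g + add X1' X2' t) - \<phi> g)) \<longlongrightarrow> left_deriv \<phi> X1' g + left_deriv \<phi> X2' g) (at_right 0)"
    by (rule one_sided[OF G Y phi X1' X2' addL[OF X1' X2']]) (use add_lim X1' X2' in blast)
  moreover have "left_deriv \<phi> X1' g + left_deriv \<phi> X2' g = (-1) *\<^sub>R D"
    unfolding X1'_def X2'_def D_def using scale_deriv[OF Y phi X1, of "-1" g] scale_deriv[OF Y phi X2, of "-1" g]
    by (simp add: scaleR_add_right)
  ultimately have "((\<lambda>t. (1/t) *\<^sub>R (\<phi> (g + Z (- t)) - \<phi> g)) \<longlongrightarrow> (-1) *\<^sub>R D) (at_right 0)"
    using Z' by simp
  then have "((\<lambda>t. (-1) *\<^sub>R ((1/t) *\<^sub>R (\<phi> (g + Z (- t)) - \<phi> g))) \<longlongrightarrow> (-1) *\<^sub>R ((-1) *\<^sub>R D)) (at_right 0)"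
    by (rule Y_tendsto_scaleR[OF Y tendsto_const])
  then have "((\<lambda>t. q (- t)) \<longlongrightarrow> D) (at_right 0)"
    by (simp add: q_def)
  then have Lf: "(q \<longlongrightarrow> D) (at_left 0)"
    by (simp add: filterlim_at_left_to_right[of q _ 0])
  have "(q \<longlongrightarrow> D) (at 0)" by (rule filterlim_split_at[OF Lf R])
  then show ?thesis unfolding left_deriv_def D_def Z_def q_def
    by (intro tendsto_Lim) auto
qed



theorem corollary2p5:
  fixes add :: "(real \<Rightarrow> 'g::{group_add, t2_space}) \<Rightarrow> (real \<Rightarrow> 'g) \<Rightarrow> (real \<Rightarrow> 'g)"
    and T :: "(real \<Rightarrow> 'g) topology"
    and \<phi> :: "'g \<Rightarrow> 'y::{real_vector, t2_space}"
  assumes G: "topological_group TYPE('g)"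
    and vs: "real_vector_space_on (oneps TYPE('g)) add (\<lambda>t X. \<lambda>s. X (t * s))"
    and add_lim: "\<forall>X1\<in>oneps TYPE('g). \<forall>X2\<in>oneps TYPE('g).
                    unif_compact_conv (\<lambda>n t. gpow (X1 (t / real n) + X2 (t / real n)) n) (add X1 X2)"
    and T_space: "topspace T = oneps TYPE('g)"
    and T_Baire: "Baire_space T"
    and T_finer: "\<forall>S. openin (compact_open (oneps TYPE('g))) S \<longrightarrow> openin T S"
    and T_add: "continuous_map (prod_topology T T) T (\<lambda>p. add (fst p) (snd p))"
    and T_scale: "continuous_map (prod_topology euclideanreal T) T (\<lambda>p. \<lambda>s. snd p (fst p * s))"
    and Y: "metrizable_lcs TYPE('y)"
    and \<phi>: "\<phi> \<in> LUC1_loc"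
  shows "(\<forall>X1\<in>oneps TYPE('g). \<forall>X2\<in>oneps TYPE('g).
            left_deriv \<phi> (add X1 X2) = (\<lambda>g. left_deriv \<phi> X1 g + left_deriv \<phi> X2 g)) \<and>
         (\<forall>t. \<forall>X\<in>oneps TYPE('g). left_deriv \<phi> (\<lambda>s. X (t * s)) = (\<lambda>g. t *\<^sub>R left_deriv \<phi> X g)) \<and>
         continuous_map T LUC_pointwise (left_deriv \<phi>)"
proof (intro conjI ballI allI)
  fix X1 X2 assume X1: "X1 \<in> oneps TYPE('g)" and X2: "X2 \<in> oneps TYPE('g)"
  show "left_deriv \<phi> (add X1 X2) = (\<lambda>g. left_deriv \<phi> X1 g + left_deriv \<phi> X2 g)"
    by (rule ext) (rule add_deriv[OF G vs add_lim Y \<phi> X1 X2])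
next
  fix t and X assume X: "X \<in> oneps TYPE('g)"
  show "left_deriv \<phi> (\<lambda>s. X (t * s)) = (\<lambda>g. t *\<^sub>R left_deriv \<phi> X g)"
    by (rule ext) (rule scale_deriv[OF Y \<phi> X])
next
  have addL: "\<And>x y. x \<in> oneps TYPE('g) \<Longrightarrow> y \<in> oneps TYPE('g) \<Longrightarrow> add x y \<in> oneps TYPE('g)"
    using vs[unfolded real_vector_space_on_def, THEN conjunct1] by blast
  have scL: "\<And>a x. x \<in> oneps TYPE('g) \<Longrightarrow> (\<lambda>s. x (a * s)) \<in> oneps TYPE('g)"
    using vs[unfolded real_vector_space_on_def, THEN conjunct2, THEN conjunct1] by blast
  have assoc: "\<And>x y z. x \<in> oneps TYPE('g) \<Longrightarrow> y \<in> oneps TYPE('g) \<Longrightarrow> z \<in> oneps TYPE('g) \<Longrightarrow>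
      add (add x y) z = add x (add y z)"
    using vs[unfolded real_vector_space_on_def, THEN conjunct2, THEN conjunct2, THEN conjunct1] by blast
  have distl: "\<And>a b x. x \<in> oneps TYPE('g) \<Longrightarrow> (\<lambda>s. x ((a + b) * s)) = add (\<lambda>s. x (a * s)) (\<lambda>s. x (b * s))"
    using vs[unfolded real_vector_space_on_def, THEN conjunct2, THEN conjunct2, THEN conjunct2,
      THEN conjunct2, THEN conjunct2, THEN conjunct2, THEN conjunct1] by blast
  have zero_oneps: "(\<lambda>s. 0::'g) \<in> oneps TYPE('g)" by (simp add: oneps_def)
  have ne: "topspace T \<noteq> {}" using zero_oneps T_space by auto
  have phiL: "\<phi> \<in> LUC_loc" using \<phi> by (simp add: LUC1_loc_def)
  have phic: "\<And>x. (\<phi> \<longlongrightarrow> \<phi> x) (at x)" by (rule LUC_cont[OF G Y phiL])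
  have evalc: "continuous_map T euclidean (\<lambda>X. X a)" for a :: real
    unfolding continuous_map_def
  proof (intro conjI allI impI)
    show "(\<lambda>X. X a) \<in> topspace T \<rightarrow> topspace euclidean" by simp
    fix S :: "'g set" assume "openin euclidean S"
    then have S: "open S" by simp
    have "openin (compact_open (oneps TYPE('g))) {X \<in> oneps TYPE('g). X ` {a} \<subseteq> S}"
      unfolding compact_open_def
      by (rule topology_generated_by_Basis) (use S in \<open>intro CollectI exI[of _ "{a}"] exI[of _ S], auto\<close>)
    then have "openin T {X \<in> oneps TYPE('g). X ` {a} \<subseteq> S}" using T_finer by blast
    then show "openin T {X \<in> topspace T. X a \<in> S}" using T_space by simp
  qed
  show "continuous_map T LUC_pointwise (left_deriv \<phi>)"
    unfolding LUC_pointwise_def continuous_map_in_subtopology continuous_map_componentwise_UNIV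
  proof (intro conjI allI)
    show "left_deriv \<phi> \<in> topspace T \<rightarrow> LUC_loc" using \<phi> T_space by (auto simp: LUC1_loc_def)
    fix g
    define fs where "fs m X = (1 / (1 / real (Suc m))) *\<^sub>R (\<phi> (g + X (1 / real (Suc m))) - \<phi> g)" for m X
    show "continuous_map T euclidean (\<lambda>X. left_deriv \<phi> X g)"
    proof (rule baire_cont[OF Y T_Baire ne, of fs])
      fix m
      define a where "a = 1 / real (Suc m)"
      have "continuous_map euclidean euclidean (\<lambda>w. (1 / a) *\<^sub>R (\<phi> (g + w) - \<phi> g))"
        unfolding continuous_map_iff_continuous2
        by (intro contI Y_tendsto_scaleR[OF Y] Y_tendsto_diff[OF Y] tendsto_const
            isCont_tendsto_compose[OF _ G_tendsto_add[OF G tendsto_const tendsto_ident_at]])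
           (simp add: isCont_def phic)
      then have "continuous_map T euclidean ((\<lambda>w. (1 / a) *\<^sub>R (\<phi> (g + w) - \<phi> g)) \<circ> (\<lambda>X. X a))"
        by (rule continuous_map_compose[OF evalc])
      then show "continuous_map T euclidean (fs m)" unfolding fs_def a_def by (simp add: o_def)
    next
      fix X assume "X \<in> topspace T"
      then have X: "X \<in> oneps TYPE('g)" using T_space by simp
      have hd: "((\<lambda>t. (1/t) *\<^sub>R (\<phi> (g + X t) - \<phi> g)) \<longlongrightarrow> left_deriv \<phi> X g) (at 0)"
        using deriv_exists[OF \<phi> X, of g] by (simp add: has_left_deriv_def)
      have fl: "filterlim (\<lambda>m. 1 / real (Suc m)) (at 0) sequentially"
        unfolding filterlim_at
      proof
        show "\<forall>\<^sub>F m in sequentially. 1 / real (Suc m) \<in> UNIV \<and> 1 / real (Suc m) \<noteq> 0" by simp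
        show "(\<lambda>m. 1 / real (Suc m)) \<longlonglongrightarrow> 0"
          using LIMSEQ_inverse_real_of_nat by (simp add: inverse_eq_divide)
      qed
      show "(\<lambda>m. fs m X) \<longlonglongrightarrow> left_deriv \<phi> X g"
        unfolding fs_def by (rule filterlim_compose[OF hd fl])
    next
      fix Z X0 assume Z: "Z \<in> topspace T" and X0: "X0 \<in> topspace T"
      have ZL: "Z \<in> oneps TYPE('g)" and X0L: "X0 \<in> oneps TYPE('g)" using Z X0 T_space by auto
      define C where "C = add (\<lambda>s. Z ((-1) * s)) X0"
      have CL: "C \<in> oneps TYPE('g)" unfolding C_def by (intro addL scL ZL X0L)
      define \<tau> where "\<tau> X = add X C" for X
      have "continuous_map T (prod_topology T T) (\<lambda>X. (X, C))"
      proof (intro continuous_map_pairedI)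
        show "continuous_map T T (\<lambda>x. x)" using continuous_map_id[of T] by (simp add: id_def)
        show "continuous_map T T (\<lambda>x. C)" unfolding continuous_map_const using CL T_space by simp
      qed
      then have "continuous_map T T ((\<lambda>p. add (fst p) (snd p)) \<circ> (\<lambda>X. (X, C)))"
        by (rule continuous_map_compose[OF _ T_add])
      then have tc: "continuous_map T T \<tau>" by (simp add: \<tau>_def[abs_def] o_def)
      have z1: "(\<lambda>s. Z (0 * s)) = (\<lambda>s. X0 (0 * s))" using oneps_0[OF ZL] oneps_0[OF X0L] by simp
      have "add Z (\<lambda>s. Z ((-1) * s)) = (\<lambda>s. Z (0 * s))"
        using distl[OF ZL, of 1 "-1"] by simp
      then have "\<tau> Z = add (\<lambda>s. X0 (0 * s)) X0"
        unfolding \<tau>_def C_def using assoc[OF ZL scL[OF ZL, of "-1"] X0L] z1 by simp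
      also have "\<dots> = X0" using distl[OF X0L, of 0 1] by simp
      finally have tZ: "\<tau> Z = X0" .
      have tf: "left_deriv \<phi> (\<tau> X) g = left_deriv \<phi> X g - left_deriv \<phi> Z g + left_deriv \<phi> X0 g"
        if "X \<in> topspace T" for X
      proof -
        have XL: "X \<in> oneps TYPE('g)" using that T_space by simp
        have "left_deriv \<phi> (\<tau> X) g = left_deriv \<phi> X g + left_deriv \<phi> C g"
          unfolding \<tau>_def by (rule add_deriv[OF G vs add_lim Y \<phi> XL CL])
        also have "left_deriv \<phi> C g = left_deriv \<phi> (\<lambda>s. Z ((-1) * s)) g + left_deriv \<phi> X0 g"
          unfolding C_def by (rule add_deriv[OF G vs add_lim Y \<phi> scL[OF ZL] X0L])
        also have "left_deriv \<phi> (\<lambda>s. Z ((-1) * s)) g = (-1) *\<^sub>R left_deriv \<phi> Z g"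
          by (rule scale_deriv[OF Y \<phi> ZL])
        finally show ?thesis by simp
      qed
      show "\<exists>\<tau>. continuous_map T T \<tau> \<and> \<tau> Z = X0 \<and>
              (\<forall>X\<in>topspace T. left_deriv \<phi> (\<tau> X) g = left_deriv \<phi> X g - left_deriv \<phi> Z g + left_deriv \<phi> X0 g)"
        using tc tZ tf by blast
    qed
  qed
qed


end
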